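(* For $A \in \mathbb{Q}$ let $$g_A(x) = b_3\,(x(x-15))^3 + b_2\,(x(x-15))^2 + b_1\,x(x-15) + b_0,$$ where $$b_0 = 36\,(128941675300A^4+235814377620A^3+34730973441A^2-216866857320A-132565503600),$$ $$b_1 = 4(A-1)(254A+219)(354070194A^2+848446325A+620203644),$$ $$b_2 = (A-1)(254A+219)(35708622A^2+96399845A+73722213),$$ $$b_3 = 4(A-1)(254A+219)(72474A^2+210275A+164709).$$ Then there exist infinitely many $A \in \mathbb{Q}$ such that the curve $C_A : y^2 = g_A(x)$ contains $16$ rational points in arithmetic progression.
   Context: Rational points $P_j = (x_j, y_j) \in \mathbb{Q}^2$, $j=1,\dots,n$, on a curve $y^2 = g(x)$ are said to be in arithmetic progression if their $x$-coordinates form an arithmetic progression, i.e. $x_j = x_1 + (j-1)d$ for some nonzero $d \in \mathbb{Q}$; $n$ is the length of the progression. *)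

theory Defs
  imports Main "HOL.Rat"
begin

definition b0 :: "rat \<Rightarrow> rat" where
  "b0 A = 36 * (128941675300*A^4 + 235814377620*A^3 + 34730973441*A^2 - 216866857320*A - 132565503600)"

definition b1 :: "rat \<Rightarrow> rat" where
  "b1 A = 4 * (A - 1) * (254*A + 219) * (354070194*A^2 + 848446325*A + 620203644)"

definition b2 :: "rat \<Rightarrow> rat" where
  "b2 A = (A - 1) * (254*A + 219) * (35708622*A^2 + 96399845*A + 73722213)"

definition b3 :: "rat \<Rightarrow> rat" where
  "b3 A = 4 * (A - 1) * (254*A + 219) * (72474*A^2 + 210275*A + 164709)"

definition gA :: "rat \<Rightarrow> rat \<Rightarrow> rat" where
  "gA A x = b3 A * (x*(x-15))^3 + b2 A * (x*(x-15))^2 + b1 A * (x*(x-15)) + b0 A"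

definition has_AP_points :: "(rat \<Rightarrow> rat) \<Rightarrow> nat \<Rightarrow> bool" where
  "has_AP_points g n \<longleftrightarrow>
     (\<exists>x1 d. d \<noteq> 0 \<and> (\<forall>j\<in>{1..n}. \<exists>y::rat. y^2 = g (x1 + of_nat (j - 1) * d)))"

end

theory Submission
  imports Defs
begin


lemma b0_hom:
  fixes M D :: rat assumes "D \<noteq> 0"
  shows "b0 (M/D) * D^4 = 36*(128941675300*M^4 + 235814377620*M^3*D + 34730973441*M^2*D^2 - 216866857320*M*D^3 - 132565503600*D^4)"
  using assms by (simp add: b0_def field_simps power2_eq_square power3_eq_cube power4_eq_xxxx)

lemma quartic_id:
  fixes X Y :: rat
  shows "128941675300*(Y - 4137*X - 10278162909)^4 + 235814377620*(Y - 4137*X - 10278162909)^3*(Y - 5083*X + 9890597769) + 34730973441*(Y - 4137*X - 10278162909)^2*(Y - 5083*X + 9890597769)^2 - 216866857320*(Y - 4137*X - 10278162909)*(Y - 5083*X + 9890597769)^3 - 132565503600*(Y - 5083*X + 9890597769)^4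
   - 50054665441 * (X^3 - 63960129*X^2 - 336241770453*X - 7324204897998951507 + 196958361600*Y)^2
   = (Y^2 - X^3 - 336241770453*X - 77757946772431014) * (50054665441*Y^2 - 19717369791391002931200*Y + 50054665441*X^3 - 6403005717316403778*X^2 + 273041544914190460738659681*X - 1939570221572164200467504866278348)"
  by algebra



lemma inv_id:
  fixes X Y :: rat
  shows "100109330882*((X^3 - 63960129*X^2 - 336241770453*X - 7324204897998951507 + 196958361600*Y) + (Y - 5083*X + 9890597769)^2)
    + 1075804923622*(946*X - 20168760678)*(Y - 5083*X + 9890597769) + 505274719367*(946*X - 20168760678)^2
    - 223729*(946*X - 20168760678)^2*X = (Y^2 - X^3 - 336241770453*X - 77757946772431014) * 100109330882"
  by algebra

definition psi :: "rat \<Rightarrow> rat \<Rightarrow> rat" where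
  "psi A V = ((2*223729*(V/6+223729) + 1075804923622*(A-1))/(A-1)^2 + 505274719367)/223729"

lemma inv_lemma:
  fixes X Y :: rat
  assumes c: "Y^2 = X^3 + 336241770453*X + 77757946772431014"
  and dn: "Y - 5083*X + 9890597769 \<noteq> 0" and nn: "946*X - 20168760678 \<noteq> 0"
  shows "X = psi ((Y - 4137*X - 10278162909)/(Y - 5083*X + 9890597769))
     (6*223729*(X^3 - 63960129*X^2 - 336241770453*X - 7324204897998951507 + 196958361600*Y)/(Y - 5083*X + 9890597769)^2)"
proof -
  define D where "D = Y - 5083*X + 9890597769"
  define N where "N = 946*X - 20168760678"
  define W where "W = X^3 - 63960129*X^2 - 336241770453*X - 7324204897998951507 + 196958361600*Y"
  have e: "Y^2 - X^3 - 336241770453*X - 77757946772431014 = 0" using c by simp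
  have i: "100109330882*(W + D^2) + 1075804923622*N*D + 505274719367*N^2 - 223729*N^2*X = 0"
    using inv_id[of X Y] e unfolding D_def N_def W_def by simp
  have am: "(Y - 4137*X - 10278162909)/D - 1 = N/D" using dn unfolding D_def N_def by (simp add: field_simps)
  have "psi ((Y - 4137*X - 10278162909)/D) (6*223729*W/D^2) = ((2*223729*(223729*W/D^2+223729) + 1075804923622*(N/D))/(N/D)^2 + 505274719367)/223729"
    unfolding psi_def am by simp
  also have "\<dots> = (100109330882*(W + D^2) + 1075804923622*N*D + 505274719367*N^2)/(223729*N^2)"
    using dn nn unfolding D_def[symmetric] N_def[symmetric] by (simp add: field_simps power2_eq_square)
  also have "\<dots> = X" using i nn unfolding N_def[symmetric] by (simp add: field_simps)
  finally show ?thesis unfolding D_def W_def by simp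
qed



lemma g_sq:
  fixes A :: rat shows
  "gA A 1 = (1086864*A^2 + 511020*A - 255510)^2"
  "gA A 2 = (354840*A^2 - 709680*A - 987534)^2"
  "gA A 3 = (103380*A^2 - 675030*A - 770724)^2"
  "gA A 4 = (317244*A^2 + 617070*A + 408060)^2"
  "gA A 5 = (354840*A^2 + 732024*A + 255510)^2"
  "gA A 6 = (263904*A^2 + 624420*A + 454050)^2"
  "gA A 7 = (94740*A^2 + 647730*A + 599904)^2"
  "gA A 8 = (94740*A^2 + 647730*A + 599904)^2"
  "gA A 9 = (263904*A^2 + 624420*A + 454050)^2"
  "gA A 10 = (354840*A^2 + 732024*A + 255510)^2"
  "gA A 11 = (317244*A^2 + 617070*A + 408060)^2"
  "gA A 12 = (103380*A^2 - 675030*A - 770724)^2"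
  "gA A 13 = (354840*A^2 - 709680*A - 987534)^2"
  "gA A 14 = (1086864*A^2 + 511020*A - 255510)^2"
  "gA A 0 = b0 A" "gA A 15 = b0 A"
  by (simp_all add: gA_def b0_def b1_def b2_def b3_def power2_eq_square power3_eq_cube; algebra)+

lemma ap:
  fixes A V :: rat assumes "b0 A = V^2"
  shows "has_AP_points (gA A) 16"
  unfolding has_AP_points_def
proof (rule exI[of _ 0], rule exI[of _ 1], intro conjI ballI)
  fix j :: nat assume "j \<in> {1..16}"

  then have "j - 1 \<le> 15" by auto
  then have "j - 1 = 0 \<or> j - 1 = 1 \<or> j - 1 = 2 \<or> j - 1 = 3 \<or> j - 1 = 4 \<or> j - 1 = 5 \<or> j - 1 = 6 \<or> j - 1 = 7 \<or>
    j - 1 = 8 \<or> j - 1 = 9 \<or> j - 1 = 10 \<or> j - 1 = 11 \<or> j - 1 = 12 \<or> j - 1 = 13 \<or> j - 1 = 14 \<or> j - 1 = 15"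
    by presburger
  then have "j - 1 \<in> {0,1,2,3,4,5,6,7,8,9,10,11,12,13,14,15}" by (simp only: insert_iff empty_iff simp_thms)
  moreover have "\<exists>y. y^2 = gA A (of_nat k)" if "k \<in> {0,1,2,3,4,5,6,7,8,9,10,11,12,13,14,15}" for k :: nat
    using that assms by (auto simp: g_sq)
  ultimately have "\<exists>y. y^2 = gA A (of_nat (j - 1))" by blast
  then show "\<exists>y. y^2 = gA A (0 + of_nat (j - 1) * 1)" by (simp only: add_0_left mult_1_right)
qed simp



lemma dbl_curve:
  fixes X Y a b :: rat
  assumes c: "Y^2 = X^3 + a*X + b" and y: "Y \<noteq> 0"
  defines "m \<equiv> (3*X^2+a)/(2*Y)"
  defines "X' \<equiv> m^2 - 2*X"
  defines "Y' \<equiv> m*(X - X') - Y"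
  shows "Y'^2 = X'^3 + a*X' + b" and "X' = (X^4 - 2*a*X^2 - 8*b*X + a^2)/(4*(X^3+a*X+b))"
proof -
  have cz: "X^3 + a*X + b \<noteq> 0" using c y by auto
  show "X' = (X^4 - 2*a*X^2 - 8*b*X + a^2)/(4*(X^3+a*X+b))"
    unfolding X'_def m_def using y cz c[symmetric]
    by (simp add: field_simps power2_eq_square power3_eq_cube power4_eq_xxxx) algebra
  show "Y'^2 = X'^3 + a*X' + b"
    unfolding Y'_def X'_def m_def using y c
    by (simp add: field_simps power2_eq_square power3_eq_cube) algebra
qed

definition good :: "rat \<Rightarrow> nat \<Rightarrow> bool" where
  "good X k \<longleftrightarrow> (\<exists>u w::int. odd u \<and> odd w \<and> X = of_int u / of_int (4^k * w))"

lemma even_pow4: "k \<ge> 1 \<Longrightarrow> even ((4::int)^k)"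
  by (cases k) auto

lemma good_step:
  fixes a b :: int
  assumes g: "good X k" and k: "k \<ge> 1"
  shows "X^3 + of_int a*X + of_int b \<noteq> 0"
    and "good ((X^4 - 2*of_int a*X^2 - 8*of_int b*X + of_int a^2)/(4*(X^3+of_int a*X+of_int b))) (Suc k)"
proof -
  obtain u w where u: "odd u" and w: "odd w" and X: "X = of_int u / of_int (4^k * w)"
    using g unfolding good_def by blast
  define M where "M = 4^k * w"
  have Mev: "even M" unfolding M_def using even_pow4[OF k] by simp
  have M0: "M \<noteq> 0" unfolding M_def using w by auto
  define D where "D = u^3 + a*u*M^2 + b*M^3"
  define N where "N = u^4 - 2*a*u^2*M^2 - 8*b*u*M^3 + a^2*M^4"
  have Dodd: "odd D" unfolding D_def using u Mev by auto
  have Nodd: "odd N" unfolding N_def using u Mev by auto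
  have XM: "X = of_int u / of_int M" using X M_def by simp
  have cub: "X^3 + of_int a*X + of_int b = of_int D / of_int M^3"
    unfolding XM D_def using M0 by (simp add: field_simps power2_eq_square power3_eq_cube)
  have "D \<noteq> 0" using Dodd by auto
  then have D0: "(of_int D :: rat) \<noteq> 0" by simp
  show "X^3 + of_int a*X + of_int b \<noteq> 0" unfolding cub using D0 M0 by simp
  have quar: "X^4 - 2*of_int a*X^2 - 8*of_int b*X + of_int a^2 = of_int N / of_int M^4"
    unfolding XM N_def using M0 by (simp add: field_simps power2_eq_square power3_eq_cube power4_eq_xxxx)
  have "(X^4 - 2*of_int a*X^2 - 8*of_int b*X + of_int a^2)/(4*(X^3+of_int a*X+of_int b))
      = of_int N / of_int (4^(Suc k) * (w*D))"
    unfolding quar cub using M0 D0 unfolding M_def by (simp add: field_simps power2_eq_square power3_eq_cube power4_eq_xxxx)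
  then show "good ((X^4 - 2*of_int a*X^2 - 8*of_int b*X + of_int a^2)/(4*(X^3+of_int a*X+of_int b))) (Suc k)"
    unfolding good_def using Nodd w Dodd by (intro exI[of _ N] exI[of _ "w*D"]) auto
qed

lemma good_noline:
  fixes a b p r :: int
  assumes g: "good X k" and k: "k \<ge> 1"
  shows "(of_int p * X + of_int r)^2 \<noteq> X^3 + of_int a*X + of_int b"
proof
  assume h: "(of_int p * X + of_int r)^2 = X^3 + of_int a*X + of_int b"
  obtain u w where u: "odd u" and w: "odd w" and X: "X = of_int u / of_int (4^k * w)"
    using g unfolding good_def by blast
  define M where "M = 4^k * w"
  have Mev: "even M" unfolding M_def using even_pow4[OF k] by simp
  have M0: "M \<noteq> 0" unfolding M_def using w by auto
  have XM: "X = of_int u / of_int M" using X M_def by simp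
  have l: "(of_int p * X + of_int r)^2 = of_int ((p*u + r*M)^2) / (of_int M^2 :: rat)"
    unfolding XM using M0 by (simp add: field_simps power2_eq_square)
  have rr: "X^3 + of_int a*X + of_int b = of_int (u^3 + a*u*M^2 + b*M^3) / (of_int M^3 :: rat)"
    unfolding XM using M0 by (simp add: field_simps power2_eq_square power3_eq_cube)
  have "of_int ((p*u + r*M)^2) / (of_int M^2 :: rat) = of_int (u^3 + a*u*M^2 + b*M^3) / (of_int M^3 :: rat)"
    using h l rr by simp
  then have "(of_int ((p*u + r*M)^2 * M^3) :: rat) = of_int ((u^3 + a*u*M^2 + b*M^3) * M^2)"
    using M0 by (simp add: frac_eq_eq)
  then have "(p*u + r*M)^2 * M^3 = (u^3 + a*u*M^2 + b*M^3) * M^2" by (simp only: of_int_eq_iff)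
  then have "M^2 * (M*(p*u + r*M)^2) = M^2 * (u^3 + a*u*M^2 + b*M^3)" by (simp add: algebra_simps power3_eq_cube power2_eq_square)
  then have "M*(p*u + r*M)^2 = u^3 + a*u*M^2 + b*M^3" using M0 by simp
  moreover have "odd (u^3 + a*u*M^2 + b*M^3)" using u Mev by auto
  moreover have "even (M*(p*u + r*M)^2)" using Mev by simp
  ultimately show False by metis
qed

lemma good_nonconst:
  fixes p r :: int
  assumes g: "good X k" and k: "k \<ge> 1" and p: "odd p"
  shows "of_int p * X \<noteq> of_int r"
proof
  assume h: "of_int p * X = of_int r"
  obtain u w where u: "odd u" and w: "odd w" and X: "X = of_int u / of_int (4^k * w)"
    using g unfolding good_def by blast
  define M where "M = 4^k * w"
  have Mev: "even M" unfolding M_def using even_pow4[OF k] by simp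
  have M0: "M \<noteq> 0" unfolding M_def using w by auto
  have "(of_int (p*u)::rat) = of_int (r*M)" using h M0 unfolding X M_def[symmetric] by (simp add: field_simps)
  then have "p*u = r*M" by (simp only: of_int_eq_iff)
  then show False using u p Mev by (metis even_mult_iff)
qed

lemma good_inj:
  assumes "good X k" "good X k'"
  shows "k = k'"
proof (rule ccontr)
  assume ne: "k \<noteq> k'"
  have main: False if g1: "good X k" and g2: "good X k'" and lt: "k < k'" for k k'
  proof -
    obtain u w where u: "odd u" and w: "odd w" and X: "X = of_int u / of_int (4^k * w)"
      using g1 unfolding good_def by blast
    obtain u' w' where u': "odd u'" and w': "odd w'" and X': "X = of_int u' / of_int (4^k' * w')"
      using g2 unfolding good_def by blast
    have w0: "w \<noteq> 0" "w' \<noteq> 0" using w w' by auto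
    have "(of_int u / of_int (4^k * w) :: rat) = of_int u' / of_int (4^k' * w')" using X X' by simp
    then have "(of_int (u * (4^k' * w')) :: rat) = of_int (u' * (4^k * w))"
      using w0 by (simp add: field_simps)
    then have e: "u * (4^k' * w') = u' * (4^k * w)" by (simp only: of_int_eq_iff)
    have "(4::int)^k' = 4^k * 4^(k'-k)" using \<open>k < k'\<close> by (simp add: power_add[symmetric])
    then have "4^k * (u * 4^(k'-k) * w') = 4^k * (u' * w)" using e by (simp add: algebra_simps)
    then have "u * 4^(k'-k) * w' = u' * w" by simp
    moreover have "even (u * 4^(k'-k) * w')" using even_pow4[of "k'-k"] \<open>k < k'\<close> by simp
    ultimately show False using u' w by simp
  qed
  from ne have "k < k' \<or> k' < k" by arith
  then show False using main assms by blast
qed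



lemma quartic_lemma:
  fixes X Y :: rat
  assumes c: "Y^2 = X^3 + 336241770453*X + 77757946772431014"
  and dn: "Y - 5083*X + 9890597769 \<noteq> 0"
  shows "b0 ((Y - 4137*X - 10278162909)/(Y - 5083*X + 9890597769)) =
     (6*223729*(X^3 - 63960129*X^2 - 336241770453*X - 7324204897998951507 + 196958361600*Y)/(Y - 5083*X + 9890597769)^2)^2"
proof -
  define D where "D = Y - 5083*X + 9890597769"
  define M where "M = Y - 4137*X - 10278162909"
  define W where "W = X^3 - 63960129*X^2 - 336241770453*X - 7324204897998951507 + 196958361600*Y"
  have e: "Y^2 - X^3 - 336241770453*X - 77757946772431014 = 0" using c by simp
  have D0: "D \<noteq> 0" using dn D_def by simp
  have s: "128941675300*M^4 + 235814377620*M^3*D + 34730973441*M^2*D^2 - 216866857320*M*D^3 - 132565503600*D^4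
     = 50054665441 * W^2"
    using quartic_id[of Y X] e unfolding D_def M_def W_def by simp
  have "b0 (M/D) * D^4 = 36*(50054665441 * W^2)" using b0_hom[OF D0, of M] s by simp
  then have "b0 (M/D) = 36*50054665441 * W^2 / D^4" using D0 by (simp add: field_simps)
  also have "\<dots> = (6*223729*W/D^2)^2" by (simp add: power2_eq_square power4_eq_xxxx)
  finally show ?thesis unfolding D_def M_def W_def .
qed

definition dbl :: "rat \<times> rat \<Rightarrow> rat \<times> rat" where
  "dbl P = (let X = fst P; Y = snd P; m = (3*X^2 + 336241770453)/(2*Y); X' = m^2 - 2*X in (X', m*(X - X') - Y))"

primrec pt :: "nat \<Rightarrow> rat \<times> rat" where
  "pt 0 = (1606564977/13924, -564614979033105/1643032)"
| "pt (Suc n) = dbl (pt n)"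

definition oncurve :: "rat \<times> rat \<Rightarrow> bool" where
  "oncurve P \<longleftrightarrow> (snd P)^2 = (fst P)^3 + 336241770453*(fst P) + 77757946772431014"

lemma pt_inv: "oncurve (pt n) \<and> good (fst (pt n)) (Suc n)"
proof (induction n)
  case 0
  have "oncurve (pt 0)" by (simp add: oncurve_def power2_eq_square power3_eq_cube)
  moreover have "good (fst (pt 0)) (Suc 0)" unfolding good_def
    by (rule exI[of _ 1606564977], rule exI[of _ 3481]) simp
  ultimately show ?case by simp
next
  case (Suc n)
  obtain X Y where P: "pt n = (X, Y)" by (cases "pt n")
  have c: "Y^2 = X^3 + 336241770453*X + 77757946772431014" using Suc P by (simp add: oncurve_def)
  have g: "good X (Suc n)" using Suc P by simp
  have cz: "X^3 + 336241770453*X + 77757946772431014 \<noteq> 0" using good_step(1)[OF g, of 336241770453 77757946772431014] by simp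
  have y: "Y \<noteq> 0" using c cz by auto
  define m where "m = (3*X^2+336241770453)/(2*Y)"
  define X' where "X' = m^2 - 2*X"
  define Y' where "Y' = m*(X - X') - Y"
  have eq: "pt (Suc n) = (X', Y')"
    using P by (simp add: dbl_def Let_def m_def X'_def Y'_def)
  have c': "Y'^2 = X'^3 + 336241770453*X' + 77757946772431014"
    using dbl_curve(1)[OF c y] unfolding Y'_def X'_def m_def .
  have xf: "X' = (X^4 - 2*336241770453*X^2 - 8*77757946772431014*X + 336241770453^2)/(4*(X^3+336241770453*X+77757946772431014))"
    using dbl_curve(2)[OF c y] unfolding X'_def m_def .
  have g': "good ((X^4 - 2*336241770453*X^2 - 8*77757946772431014*X + 336241770453^2)/(4*(X^3+336241770453*X+77757946772431014))) (Suc (Suc n))"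
    using good_step(2)[OF g, of 336241770453 77757946772431014] by simp
  show ?case unfolding eq oncurve_def fst_conv snd_conv
    using c' g' xf by simp
qed



lemma sq_finite: "finite {V::rat. V^2 = c}"
proof (cases "\<exists>s::rat. s^2 = c")
  case True
  then obtain s where s: "s^2 = c" by blast
  have "{V::rat. V^2 = c} \<subseteq> {s, -s}" using s by (auto simp: power2_eq_iff)
  then show ?thesis by (rule finite_subset) simp
next
  case False
  then have "{V::rat. V^2 = c} = {}" by auto
  then show ?thesis by simp
qed

lemma pt_props:
  fixes n :: nat
  defines "X \<equiv> fst (pt n)" and "Y \<equiv> snd (pt n)"
  defines "A \<equiv> (Y - 4137*X - 10278162909)/(Y - 5083*X + 9890597769)"
  defines "V \<equiv> 6*223729*(X^3 - 63960129*X^2 - 336241770453*X - 7324204897998951507 + 196958361600*Y)/(Y - 5083*X + 9890597769)^2"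
  shows "b0 A = V^2" and "X = psi A V"
proof -
  have c: "Y^2 = X^3 + 336241770453*X + 77757946772431014" using pt_inv[of n] unfolding oncurve_def X_def Y_def by simp
  have g: "good X (Suc n)" using pt_inv[of n] unfolding X_def by simp
  have dn: "Y - 5083*X + 9890597769 \<noteq> 0"
  proof
    assume "Y - 5083*X + 9890597769 = 0"
    then have "Y = of_int 5083 * X + of_int (-9890597769)" by simp
    then have "(of_int 5083 * X + of_int (-9890597769))^2 = X^3 + of_int 336241770453*X + of_int 77757946772431014"
      using c by simp
    moreover have k1: "1 \<le> Suc n" by simp
    ultimately show False using good_noline[OF g k1] by blast
  qed
  have nn: "946*X - 20168760678 \<noteq> 0"
  proof
    assume "946*X - 20168760678 = 0"
    then have "of_int 473 * X = of_int 10084380339" by simp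
    then show False using good_nonconst[OF g, of 473 10084380339] by simp
  qed
  show "b0 A = V^2" unfolding A_def V_def using quartic_lemma[OF c dn] .
  show "X = psi A V" unfolding A_def V_def using inv_lemma[OF c dn nn] .
qed

theorem theorem3:
  shows "infinite {A::rat. has_AP_points (gA A) 16}"
proof
  assume fin: "finite {A::rat. has_AP_points (gA A) 16}"
  define S where "S = {A::rat. has_AP_points (gA A) 16}"
  define T where "T = Sigma S (\<lambda>A. {V::rat. V^2 = b0 A})"
  have finT: "finite T" unfolding T_def using fin S_def sq_finite by (intro finite_SigmaI) auto
  have sub: "range (\<lambda>n. fst (pt n)) \<subseteq> (\<lambda>(A,V). psi A V) ` T"
  proof
    fix z assume "z \<in> range (\<lambda>n. fst (pt n))"
    then obtain n where z: "z = fst (pt n)" by blast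
    define X where "X = fst (pt n)"
    define Y where "Y = snd (pt n)"
    define A where "A = (Y - 4137*X - 10278162909)/(Y - 5083*X + 9890597769)"
    define V where "V = 6*223729*(X^3 - 63960129*X^2 - 336241770453*X - 7324204897998951507 + 196958361600*Y)/(Y - 5083*X + 9890597769)^2"
    have h1: "b0 A = V^2" using pt_props(1)[of n] unfolding A_def V_def X_def Y_def .
    have h2: "X = psi A V" using pt_props(2)[of n] unfolding A_def V_def X_def Y_def .
    have "(A, V) \<in> T" unfolding T_def S_def using ap[OF h1] h1 by simp
    then show "z \<in> (\<lambda>(A,V). psi A V) ` T" using h2 z X_def by force
  qed
  have "inj (\<lambda>n. fst (pt n))"
  proof (rule injI)
    fix n m assume "fst (pt n) = fst (pt m)"
    then have "good (fst (pt n)) (Suc n)" "good (fst (pt n)) (Suc m)" using pt_inv[of n] pt_inv[of m] by auto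
    then show "n = m" using good_inj by blast
  qed
  then have "infinite (range (\<lambda>n. fst (pt n)))" using finite_imageD[of "\<lambda>n. fst (pt n)" UNIV] infinite_UNIV_nat by blast
  moreover have "finite ((\<lambda>(A,V). psi A V) ` T)" using finT by simp
  ultimately show False using sub finite_subset by blast
qed

end
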